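(* Let $\varepsilon\in[0,1)$ and $\mathcal{P},\mathcal{E}\subseteq\mathcal{D}(P)$. (a) If $\mathcal{B}_\varepsilon(\mathcal{P})\cap\mathcal{E}\neq\emptyset$, then $\beta\overline{C}_{\mathrm{TO},\varepsilon}(\mathcal{P},\mathcal{E})=0$, and this zero cost is achieved by a thermal operation of the form $\mathcal{F}(\cdot)=\operatorname{tr}[\cdot]\,\tau$ for a suitable $\tau\in\mathcal{E}$ (discarding the input and preparing $\tau$). (b) If $T(\mathcal{P},\mathcal{E})>\varepsilon$, then $$\beta\overline{C}_{\mathrm{GPL},\varepsilon}(\mathcal{P},\mathcal{E})\ge\log\frac{T(\mathcal{P},\mathcal{E})-\varepsilon}{\operatorname{diam}(\mathcal{E})},$$ with the conventions that $\operatorname{diam}(\mathcal{E})=0$ when $\mathcal{E}$ is a singleton (so the right side is $\log\infty=\infty$).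
   Context: All Hilbert spaces are finite-dimensional; $\mathcal{D}(P)$ is the set of density operators on $P$; $T(X,Y)=\tfrac12\|X-Y\|_1$; $\mathcal{B}_\varepsilon(\mathcal{P})=\{\omega\in\mathcal{D}:T(\omega,\rho)\le\varepsilon\text{ for some }\rho\in\mathcal{P}\}$; $T(\mathcal{P},\mathcal{E})=\inf_{\rho\in\mathcal{P},\tau\in\mathcal{E}}T(\rho,\tau)$; $\operatorname{diam}(\mathcal{E})=\sup_{\tau,\tau'\in\mathcal{E}}T(\tau,\tau')$. Battery: qubit $B$ with basis $\{|0\rangle,|1\rangle\}$, $\pi_M=(1-\tfrac1M)|0\rangle\langle0|+\tfrac1M|1\rangle\langle1|$ for $M>1$, $\Pi_M=\{\pi_{M'}:M'\in[M,\infty)\}$. The one-shot work cost from a dirty battery under a class $\mathfrak{F}$ is $\beta\overline{C}_{\mathfrak{F},\varepsilon}(\mathcal{P},\mathcal{E})=\log\inf\{M>1:\exists\mathcal{F}\in\mathfrak{F}\text{ with }T(\mathcal{F}(|1\rangle\langle1|),\rho)\le\varepsilon\text{ for some }\rho\in\mathcal{P}\text{ and }\mathcal{F}(\sigma)\in\mathcal{E}\ \forall\sigma\in\Pi_M\}$ (with $\log\inf\emptyset=+\infty$). GPL is the class of all linear maps (Gibbs preservation being the condition $\mathcal{F}(\Pi_M)\subseteq\mathcal{E}$); TO is the class of thermal operations, i.e. maps $\rho\mapsto\operatorname{tr}_{\text{rest}}[U(\rho\otimes\tau^E)U^\dagger]$ with $\tau^E$ an ancilla Gibbs state and $U$ energy-conserving;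 replacer maps $\operatorname{tr}[\cdot]\tau$ are thermal operations (taking an ancilla with Gibbs state $\tau$ and $U=I$). *)

theory Defs
  imports "Jordan_Normal_Form.Schur_Decomposition" "HOL-Library.Extended_Real"
begin

text \<open>States and operators on the system P (of dimension d) and on the battery qubit B are
  complex matrices (Jordan_Normal_Form).  Channels/maps are functions on matrices.\<close>

definition psd_mat :: "nat \<Rightarrow> complex mat \<Rightarrow> bool" where
  "psd_mat d A \<longleftrightarrow> A \<in> carrier_mat d d \<and>
     (\<forall>v \<in> carrier_vec d. Im (conjugate v \<bullet> (A *\<^sub>v v)) = 0 \<and> 0 \<le> Re (conjugate v \<bullet> (A *\<^sub>v v)))"

definition mtrace :: "complex mat \<Rightarrow> complex" where
  "mtrace A = (\<Sum>i < dim_row A. A $$ (i, i))"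

definition density_ops :: "nat \<Rightarrow> complex mat set" where
  "density_ops d = {A. psd_mat d A \<and> mtrace A = 1}"

text \<open>Trace norm: sum of the singular values of X, i.e. the sum of the square roots of the
  eigenvalues (counted with algebraic multiplicity) of X^dagger X.\<close>
definition trace_norm :: "complex mat \<Rightarrow> real" where
  "trace_norm X = (let p = char_poly (mat_adjoint X * X) in
     (\<Sum>z \<in> {z. poly p z = 0}. real (order z p) * sqrt (Re z)))"

definition tdist :: "complex mat \<Rightarrow> complex mat \<Rightarrow> real" where
  "tdist X Y = trace_norm (X - Y) / 2"

definition eps_ball :: "nat \<Rightarrow> real \<Rightarrow> complex mat set \<Rightarrow> complex mat set" where
  "eps_ball d \<epsilon> \<P> = {\<omega> \<in> density_ops d. \<exists>\<rho>\<in>\<P>. tdist \<omega> \<rho> \<le> \<epsilon>}"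

definition tdist_sets :: "complex mat set \<Rightarrow> complex mat set \<Rightarrow> real" where
  "tdist_sets \<P> \<E> = Inf {tdist \<rho> \<tau> | \<rho> \<tau>. \<rho> \<in> \<P> \<and> \<tau> \<in> \<E>}"

definition diam :: "complex mat set \<Rightarrow> real" where
  "diam \<E> = Sup {tdist \<tau> \<tau>' | \<tau> \<tau>'. \<tau> \<in> \<E> \<and> \<tau>' \<in> \<E>}"

definition ket1_proj :: "complex mat" where
  "ket1_proj = mat 2 2 (\<lambda>(i,j). if i = 1 \<and> j = 1 then 1 else 0)"

definition batt_pi :: "real \<Rightarrow> complex mat" where
  "batt_pi M = mat 2 2 (\<lambda>(i,j). if i = 0 \<and> j = 0 then complex_of_real (1 - 1/M)
                               else if i = 1 \<and> j = 1 then complex_of_real (1/M) else 0)"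

definition batt_Pi :: "real \<Rightarrow> complex mat set" where
  "batt_Pi M = {batt_pi M' | M'. M' \<ge> M}"

definition GPL :: "nat \<Rightarrow> (complex mat \<Rightarrow> complex mat) set" where
  "GPL d = {F. (\<forall>A \<in> carrier_mat 2 2. F A \<in> carrier_mat d d) \<and>
     (\<forall>A \<in> carrier_mat 2 2. \<forall>B \<in> carrier_mat 2 2. F (A + B) = F A + F B) \<and>
     (\<forall>A \<in> carrier_mat 2 2. \<forall>c. F (c \<cdot>\<^sub>m A) = c \<cdot>\<^sub>m F A)}"

definition replacer :: "complex mat \<Rightarrow> complex mat \<Rightarrow> complex mat" where
  "replacer \<tau> = (\<lambda>X. mtrace X \<cdot>\<^sub>m \<tau>)"

definition feasible ::
  "(complex mat \<Rightarrow> complex mat) \<Rightarrow> real \<Rightarrow> complex mat set \<Rightarrow> complex mat set \<Rightarrow> real \<Rightarrow> bool" where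
  "feasible F \<epsilon> \<P> \<E> M \<longleftrightarrow>
     (\<exists>\<rho>\<in>\<P>. tdist (F ket1_proj) \<rho> \<le> \<epsilon>) \<and> (\<forall>\<sigma> \<in> batt_Pi M. F \<sigma> \<in> \<E>)"

text \<open>beta * C-bar_{F,eps}(P,E) = log inf {M > 1. ...}, with log inf {} = +infinity.\<close>
definition work_cost ::
  "(complex mat \<Rightarrow> complex mat) set \<Rightarrow> real \<Rightarrow> complex mat set \<Rightarrow> complex mat set \<Rightarrow> ereal" where
  "work_cost \<FF> \<epsilon> \<P> \<E> =
     (let S = {M. M > 1 \<and> (\<exists>F \<in> \<FF>. feasible F \<epsilon> \<P> \<E> M)} in
      if S = {} then \<infinity> else ereal (ln (Inf S)))"

end

theory Submission
  imports Defs
begin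


definition herm :: "nat \<Rightarrow> complex mat \<Rightarrow> bool" where
  "herm n A \<longleftrightarrow> A \<in> carrier_mat n n \<and> mat_adjoint A = A"

definition unitary :: "nat \<Rightarrow> complex mat \<Rightarrow> bool" where
  "unitary n U \<longleftrightarrow> U \<in> carrier_mat n n \<and> mat_adjoint U * U = 1\<^sub>m n \<and> U * mat_adjoint U = 1\<^sub>m n"

definition diagm :: "nat \<Rightarrow> (nat \<Rightarrow> real) \<Rightarrow> complex mat" where
  "diagm n l = mat n n (\<lambda>(i,j). if i = j then complex_of_real (l i) else 0)"

lemma adj_dims[simp]: "dim_row (mat_adjoint A) = dim_col A" "dim_col (mat_adjoint A) = dim_row A"
  unfolding mat_adjoint_def by simp_all

lemma adj_carrier[simp]: "A \<in> carrier_mat n m \<Longrightarrow> mat_adjoint A \<in> carrier_mat m n"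
  unfolding carrier_mat_def by simp

lemma adj_index[simp]: fixes A :: "complex mat"
  shows "i < dim_col A \<Longrightarrow> j < dim_row A \<Longrightarrow> mat_adjoint A $$ (i,j) = cnj (A $$ (j,i))"
  unfolding mat_adjoint_def by (simp add: mat_of_rows_index)

lemma adj_adj[simp]: fixes A :: "complex mat" shows "mat_adjoint (mat_adjoint A) = A"
  by (rule eq_matI) simp_all

lemma mult_index: assumes "A \<in> carrier_mat n m" "B \<in> carrier_mat m k" "i < n" "j < k"
  shows "(A * B) $$ (i,j) = (\<Sum>l<m. A $$ (i,l) * B $$ (l,j))"
  using assms by (simp add: scalar_prod_def atLeast0LessThan)

lemma adj_mult: fixes A B :: "complex mat"
  assumes A: "A \<in> carrier_mat n m" and B: "B \<in> carrier_mat m k"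
  shows "mat_adjoint (A*B) = mat_adjoint B * mat_adjoint A"
proof (rule eq_matI)
  fix i j assume "i < dim_row (mat_adjoint B * mat_adjoint A)" "j < dim_col (mat_adjoint B * mat_adjoint A)"
  hence i: "i < k" and j: "j < n" using A B by auto
  have "mat_adjoint (A*B) $$ (i,j) = cnj ((A*B) $$ (j,i))" using A B i j by simp
  also have "\<dots> = cnj (\<Sum>l<m. A $$ (j,l) * B $$ (l,i))" using mult_index[OF A B j i] by simp
  also have "\<dots> = (\<Sum>l<m. mat_adjoint B $$ (i,l) * mat_adjoint A $$ (l,j))"
    unfolding cnj_sum using A B i j by (intro sum.cong) auto
  also have "\<dots> = (mat_adjoint B * mat_adjoint A) $$ (i,j)"
    using mult_index[OF adj_carrier[OF B] adj_carrier[OF A] i j] by simp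
  finally show "mat_adjoint (A*B) $$ (i,j) = (mat_adjoint B * mat_adjoint A) $$ (i,j)" .
qed (insert A B, auto)


lemma order_prod_linear: fixes as :: "complex list"
  shows "order z (\<Prod>a\<leftarrow>as. [:-a,1:]) = count_list as z"
proof (induct as)
  case Nil
  then show ?case by (simp add: order_0I)
next
  case (Cons a as)
  have ne0: "(\<Prod>a\<leftarrow>a#as. [:-a,1:]) \<noteq> 0" by (simp only: prod_list_zero_iff) auto
  have ne: "[:-a,1:] * (\<Prod>a\<leftarrow>as. [:-a,1:]) \<noteq> 0" using ne0 by simp
  have "order z (\<Prod>a\<leftarrow>a#as. [:-a,1:]) = order z [:-a,1:] + order z (\<Prod>a\<leftarrow>as. [:-a,1:])"
    using order_mult[OF ne] by simp
  also have "\<dots> = (if a = z then 1 else 0) + count_list as z"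
    using Cons by (simp add: order_linear')
  finally show ?case by simp
qed

lemma sum_count: fixes f :: "complex \<Rightarrow> real"
  shows "(\<Sum>x\<in>set as. real (count_list as x) * f x) = (\<Sum>a\<leftarrow>as. f a)"
proof (induct as)
  case (Cons a as)
  have "(\<Sum>x\<in>set (a#as). real (count_list (a#as) x) * f x)
     = (\<Sum>x\<in>set (a#as). real (count_list as x) * f x + (if x = a then f x else 0))"
    by (intro sum.cong) (auto simp: algebra_simps)
  also have "\<dots> = (\<Sum>x\<in>set (a#as). real (count_list as x) * f x) + (\<Sum>x\<in>set (a#as). if x = a then f x else 0)"
    by (rule sum.distrib)
  also have "(\<Sum>x\<in>set (a#as). real (count_list as x) * f x) = (\<Sum>x\<in>set as. real (count_list as x) * f x)"
    by (rule sum.mono_neutral_right) (auto simp: count_list_0_iff)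
  also have "(\<Sum>x\<in>set (a#as). if x = a then f x else 0) = f a" by (simp add: sum.delta)
  finally show ?case using Cons by simp
qed simp

lemma roots_sum: fixes as :: "complex list" and f :: "complex \<Rightarrow> real"
  shows "(\<Sum>z\<in>{z. poly (\<Prod>a\<leftarrow>as. [:-a,1:]) z = 0}. real (order z (\<Prod>a\<leftarrow>as. [:-a,1:])) * f z) = (\<Sum>a\<leftarrow>as. f a)"
proof -
  have "{z. poly (\<Prod>a\<leftarrow>as. [:-a,1:]) z = 0} = set as"
    by (auto simp: poly_prod_list_zero_iff)
  then show ?thesis by (simp add: order_prod_linear sum_count)
qed

lemma diagm_carrier[simp]: "diagm n l \<in> carrier_mat n n"
  unfolding diagm_def by auto

lemma diagm_index[simp]: "i < n \<Longrightarrow> j < n \<Longrightarrow> diagm n l $$ (i,j) = (if i = j then complex_of_real (l i) else 0)"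
  unfolding diagm_def by auto

lemma diagm_dims[simp]: "dim_row (diagm n l) = n" "dim_col (diagm n l) = n"
  unfolding diagm_def by auto

lemma adj_diagm[simp]: "mat_adjoint (diagm n l) = diagm n l"
  by (rule eq_matI) auto

lemma diagm_mult: "diagm n l * diagm n m = diagm n (\<lambda>i. l i * m i)"
proof (rule eq_matI)
  fix i j assume ij: "i < dim_row (diagm n (\<lambda>i. l i * m i))" "j < dim_col (diagm n (\<lambda>i. l i * m i))"
  hence i: "i < n" and j: "j < n" by auto
  have "(diagm n l * diagm n m) $$ (i,j) = (\<Sum>k<n. diagm n l $$ (i,k) * diagm n m $$ (k,j))"
    using i j by (intro mult_index) auto
  also have "\<dots> = (\<Sum>k<n. if k = i then diagm n l $$ (i,k) * diagm n m $$ (k,j) else 0)"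
    by (rule sum.cong, auto simp: i j)
  also have "\<dots> = diagm n l $$ (i,i) * diagm n m $$ (i,j)" using i by simp
  finally show "(diagm n l * diagm n m) $$ (i,j) = diagm n (\<lambda>i. l i * m i) $$ (i,j)"
    using i j by auto
qed auto

lemma UD_index: assumes U: "U \<in> carrier_mat n n" and i: "i < n" and k: "k < n"
  shows "(U * diagm n l) $$ (i,k) = U $$ (i,k) * complex_of_real (l k)"
proof -
  have "(U * diagm n l) $$ (i,k) = (\<Sum>m<n. U $$ (i,m) * diagm n l $$ (m,k))"
    using U i k by (intro mult_index) auto
  also have "\<dots> = (\<Sum>m<n. if m = k then U $$ (i,m) * diagm n l $$ (m,k) else 0)"
    by (rule sum.cong, auto simp: k)
  also have "\<dots> = U $$ (i,k) * complex_of_real (l k)" using k by simp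
  finally show ?thesis .
qed

lemma UDU_index: assumes U: "U \<in> carrier_mat n n" and i: "i < n" and j: "j < n"
  shows "(U * diagm n l * mat_adjoint U) $$ (i,j) = (\<Sum>k<n. U $$ (i,k) * complex_of_real (l k) * cnj (U $$ (j,k)))"
proof -
  have "(U * diagm n l * mat_adjoint U) $$ (i,j) = (\<Sum>k<n. (U * diagm n l) $$ (i,k) * mat_adjoint U $$ (k,j))"
    using U i j by (intro mult_index[of _ n n]) auto
  also have "\<dots> = (\<Sum>k<n. U $$ (i,k) * complex_of_real (l k) * cnj (U $$ (j,k)))"
    using U i j by (intro sum.cong) (simp_all add: UD_index del: index_mult_mat)
  finally show ?thesis .
qed

lemma unitary_intro: assumes "U \<in> carrier_mat n n" "mat_adjoint U * U = 1\<^sub>m n"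
  shows "unitary n U"
  using assms mat_mult_left_right_inverse[of "mat_adjoint U" n U] unfolding unitary_def by auto

lemma unitary_adj: "unitary n U \<Longrightarrow> unitary n (mat_adjoint U)"
  unfolding unitary_def by auto

lemma unitary_mult: assumes "unitary n U" "unitary n V" shows "unitary n (U * V)"
proof -
  have c: "U \<in> carrier_mat n n" "V \<in> carrier_mat n n" "mat_adjoint U \<in> carrier_mat n n" "mat_adjoint V \<in> carrier_mat n n"
    using assms unfolding unitary_def by auto
  have "mat_adjoint (U * V) * (U * V) = mat_adjoint V * mat_adjoint U * (U * V)"
    using c by (simp add: adj_mult[OF c(1,2)])
  also have "\<dots> = mat_adjoint V * (mat_adjoint U * (U * V))"
    by (rule assoc_mult_mat[OF c(4) c(3) mult_carrier_mat[OF c(1) c(2)]])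
  also have "mat_adjoint U * (U * V) = (mat_adjoint U * U) * V"
    by (rule assoc_mult_mat[OF c(3) c(1) c(2), symmetric])
  also have "mat_adjoint V * (mat_adjoint U * U * V) = mat_adjoint V * (mat_adjoint U * U) * V"
    by (rule assoc_mult_mat[OF c(4) mult_carrier_mat[OF c(3) c(1)] c(2), symmetric])
  also have "\<dots> = 1\<^sub>m n" using assms c unfolding unitary_def by simp
  finally show ?thesis using c by (intro unitary_intro) auto
qed


lemma trace_norm_spec: assumes U: "unitary n U" and A: "A = U * diagm n l * mat_adjoint U"
  shows "trace_norm A = (\<Sum>i<n. \<bar>l i\<bar>)"
proof -
  have Uc: "U \<in> carrier_mat n n" "mat_adjoint U \<in> carrier_mat n n"
    and UU: "mat_adjoint U * U = 1\<^sub>m n" "U * mat_adjoint U = 1\<^sub>m n" using U unfolding unitary_def by auto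
  have D: "diagm n l \<in> carrier_mat n n" by simp
  have UD: "U * diagm n l \<in> carrier_mat n n" using Uc D by simp
  have DU: "diagm n l * mat_adjoint U \<in> carrier_mat n n" using mult_carrier_mat[OF D Uc(2)] .
  have Ac: "A \<in> carrier_mat n n" unfolding A using mult_carrier_mat[OF UD Uc(2)] .
  have adjA: "mat_adjoint A = A"
  proof -
    have "mat_adjoint A = mat_adjoint (mat_adjoint U) * mat_adjoint (U * diagm n l)"
      unfolding A by (rule adj_mult[OF UD Uc(2)])
    also have "\<dots> = U * (diagm n l * mat_adjoint U)"
      using adj_mult[OF Uc(1) D] by simp
    also have "\<dots> = A" unfolding A by (rule assoc_mult_mat[OF Uc(1) D Uc(2), symmetric])
    finally show ?thesis .
  qed
  have AA: "mat_adjoint A * A = U * diagm n (\<lambda>i. l i * l i) * mat_adjoint U"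
  proof -
    have "mat_adjoint A * A = (U * diagm n l * mat_adjoint U) * (U * diagm n l * mat_adjoint U)"
      using adjA A by simp
    also have "\<dots> = U * diagm n l * (mat_adjoint U * (U * diagm n l * mat_adjoint U))"
      by (rule assoc_mult_mat[OF UD Uc(2)]) (use Ac A in simp)
    also have "mat_adjoint U * (U * diagm n l * mat_adjoint U) = mat_adjoint U * (U * (diagm n l * mat_adjoint U))"
      using assoc_mult_mat[OF Uc(1) D Uc(2)] by simp
    also have "\<dots> = (mat_adjoint U * U) * (diagm n l * mat_adjoint U)"
      by (rule assoc_mult_mat[OF Uc(2) Uc(1) DU, symmetric])
    also have "\<dots> = diagm n l * mat_adjoint U" using UU Uc D by simp
    also have "U * diagm n l * (diagm n l * mat_adjoint U) = U * (diagm n l * (diagm n l * mat_adjoint U))"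
      by (rule assoc_mult_mat[OF Uc(1) D DU])
    also have "diagm n l * (diagm n l * mat_adjoint U) = (diagm n l * diagm n l) * mat_adjoint U"
      by (rule assoc_mult_mat[OF D D Uc(2), symmetric])
    also have "U * (diagm n l * diagm n l * mat_adjoint U) = U * (diagm n l * diagm n l) * mat_adjoint U"
      by (rule assoc_mult_mat[OF Uc(1) mult_carrier_mat[OF D D] Uc(2), symmetric])
    finally show ?thesis by (simp add: diagm_mult)
  qed
  have sim: "similar_mat (mat_adjoint A * A) (diagm n (\<lambda>i. l i * l i))"
  proof (rule similar_matI[where n=n and P=U and Q="mat_adjoint U"])
    show "{mat_adjoint A * A, diagm n (\<lambda>i. l i * l i), U, mat_adjoint U} \<subseteq> carrier_mat n n"
      using Uc Ac mult_carrier_mat[OF adj_carrier[OF Ac] Ac] by simp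
  qed (use UU AA in simp_all)
  have ut: "upper_triangular (diagm n (\<lambda>i. l i * l i))"
    unfolding upper_triangular_def by simp
  have dm: "diag_mat (diagm n (\<lambda>i. l i * l i)) = map (\<lambda>i. complex_of_real (l i * l i)) [0..<n]"
    unfolding diag_mat_def by simp
  have cp: "char_poly (mat_adjoint A * A) = (\<Prod>a\<leftarrow>map (\<lambda>i. complex_of_real (l i * l i)) [0..<n]. [:-a,1:])"
    unfolding char_poly_similar[OF sim] char_poly_upper_triangular[OF diagm_carrier ut] dm ..
  have "trace_norm A = (\<Sum>a\<leftarrow>map (\<lambda>i. complex_of_real (l i * l i)) [0..<n]. sqrt (Re a))"
    unfolding trace_norm_def Let_def cp by (rule roots_sum)
  also have "\<dots> = (\<Sum>i\<leftarrow>[0..<n]. \<bar>l i\<bar>)"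
    by (simp add: o_def real_sqrt_mult_self)
  also have "\<dots> = (\<Sum>i<n. \<bar>l i\<bar>)"
    by (simp add: interv_sum_list_conv_sum_set_nat atLeast0LessThan)
  finally show ?thesis .
qed



lemma conj_unitary: assumes V: "unitary n V" and D: "D \<in> carrier_mat n n"
  shows "mat_adjoint V * (V * D * mat_adjoint V) * V = D"
proof -
  have Vc: "V \<in> carrier_mat n n" "mat_adjoint V \<in> carrier_mat n n" and VV: "mat_adjoint V * V = 1\<^sub>m n"
    using V unfolding unitary_def by auto
  have DV: "D * mat_adjoint V \<in> carrier_mat n n" using mult_carrier_mat[OF D Vc(2)] .
  have "V * D * mat_adjoint V = V * (D * mat_adjoint V)" by (rule assoc_mult_mat[OF Vc(1) D Vc(2)])
  hence "mat_adjoint V * (V * D * mat_adjoint V) = (mat_adjoint V * V) * (D * mat_adjoint V)"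
    using assoc_mult_mat[OF Vc(2) Vc(1) DV] by simp
  also have "\<dots> = D * mat_adjoint V" unfolding VV by (rule left_mult_one_mat[OF DV])
  finally have "mat_adjoint V * (V * D * mat_adjoint V) * V = D * mat_adjoint V * V" by simp
  also have "\<dots> = D * (mat_adjoint V * V)" by (rule assoc_mult_mat[OF D Vc(2) Vc(1)])
  also have "\<dots> = D" unfolding VV by (rule right_mult_one_mat[OF D])
  finally show ?thesis .
qed

lemma assoc': fixes A B C :: "'a::semiring_0 mat"
  assumes "dim_col A = dim_row B" "dim_col B = dim_row C"
  shows "A * B * C = A * (B * C)"
  using assoc_mult_mat[OF carrier_matI[OF refl refl] carrier_matI[OF assms(1)[symmetric] refl]
      carrier_matI[OF assms(2)[symmetric] refl]] .

lemma herm_index: assumes "herm n A" "i < n" "j < n" shows "A $$ (i,j) = cnj (A $$ (j,i))"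
proof -
  have h: "mat_adjoint A = A" and c: "A \<in> carrier_mat n n" using assms(1) unfolding herm_def by auto
  have "cnj (A $$ (j,i)) = mat_adjoint A $$ (i,j)" using c assms by simp
  then show ?thesis using h by simp
qed

lemma sum_sq_nonneg: "0 \<le> (\<Sum>i<n. (cmod (f i))\<^sup>2)"
  by (intro sum_nonneg) simp

lemma spectral: assumes "herm n A" shows "\<exists>U l. unitary n U \<and> A = U * diagm n l * mat_adjoint U"
  using assms
proof (induct n arbitrary: A)
  case 0
  hence Ac: "A \<in> carrier_mat 0 0" unfolding herm_def by auto
  have "unitary 0 (1\<^sub>m 0)" by (rule unitary_intro) (auto intro!: eq_matI)
  moreover have "A = 1\<^sub>m 0 * diagm 0 (\<lambda>_. 0) * mat_adjoint (1\<^sub>m 0)" by (rule eq_matI) (use Ac in auto)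
  ultimately show ?case by blast
next
  case (Suc m A)
  define n where "n = Suc m"
  have Ac: "A \<in> carrier_mat n n" and hA: "mat_adjoint A = A" using Suc.prems unfolding herm_def n_def by auto
  obtain as where cp: "char_poly A = (\<Prod>a\<leftarrow>as. [:-a,1:])" and len: "length as = n"
    using char_poly_factorized[OF Ac] by blast
  define e where "e = hd as"
  have "e \<in> set as" using len unfolding e_def n_def by (cases as) auto
  hence "poly (char_poly A) e = 0" unfolding cp by (rule linear_poly_root)
  hence ev: "eigenvalue A e" using eigenvalue_root_char_poly[OF Ac] by simp
  define v where "v = find_eigenvector A e"
  have evec: "eigenvector A v e" unfolding v_def by (rule find_eigenvector[OF Ac ev])
  hence v: "v \<in> carrier_vec n" and v0: "v \<noteq> 0\<^sub>v n" and Av: "A *\<^sub>v v = e \<cdot>\<^sub>v v"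
    unfolding eigenvector_def using Ac by auto
  interpret cof_vec_space n "TYPE(complex)" .
  define b where "b = basis_completion v"
  from basis_completion[OF v v0, folded b_def]
  have b: "set b \<subseteq> carrier_vec n" and dist_b: "distinct b" and indep: "\<not> lin_dep (set b)"
    and len_b: "length b = n" and hdb: "hd b = v" by auto
  from hdb len_b obtain vs where bv: "b = v # vs" unfolding n_def by (cases b) auto
  define ws where "ws = gram_schmidt n b"
  from gram_schmidt_result[OF b dist_b indep ws_def]
  have wsc: "set ws \<subseteq> carrier_vec n" and orth: "corthogonal ws" and lws: "length ws = n"
    by (auto simp: len_b)
  have hdws: "hd ws = v" unfolding ws_def bv using gram_schmidt_hd[OF v] by simp
  have ws0: "ws ! 0 = v" using hdws lws unfolding n_def by (cases ws) auto
  have wsj: "ws ! j \<in> carrier_vec n" if "j < n" for j using wsc lws that by auto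
  define c where "c = (\<lambda>j. sqrt (\<Sum>i<n. (cmod (ws ! j $ i))\<^sup>2))"
  have sp: "ws ! k \<bullet>c ws ! j = (\<Sum>i<n. ws ! k $ i * cnj (ws ! j $ i))" if "j < n" "k < n" for j k
    using wsj[OF that(1)] wsj[OF that(2)] by (simp add: scalar_prod_def atLeast0LessThan)
  have spd: "ws ! j \<bullet>c ws ! j = complex_of_real ((c j)\<^sup>2)" if j: "j < n" for j
  proof -
    have "ws ! j \<bullet>c ws ! j = (\<Sum>i<n. complex_of_real ((cmod (ws ! j $ i))\<^sup>2))"
      unfolding sp[OF j j] by (intro sum.cong) (simp_all add: complex_norm_square del: of_real_power)
    also have "\<dots> = complex_of_real ((c j)\<^sup>2)"
    proof -
      have nn: "0 \<le> (\<Sum>i<n. (cmod (ws ! j $ i))\<^sup>2)" by (rule sum_sq_nonneg)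
      show ?thesis using nn unfolding c_def by simp
    qed
    finally show ?thesis .
  qed
  have cpos: "c j > 0" if j: "j < n" for j
  proof -
    have "ws ! j \<bullet>c ws ! j \<noteq> 0" using corthogonalD[OF orth, of j j] j lws by simp
    hence "c j \<noteq> 0" using spd[OF j] by auto
    moreover have "c j \<ge> 0" unfolding c_def by (rule real_sqrt_ge_zero[OF sum_sq_nonneg])
    ultimately show ?thesis by simp
  qed
  define W where "W = mat n n (\<lambda>(i,j). ws ! j $ i / complex_of_real (c j))"
  have Wc: "W \<in> carrier_mat n n" unfolding W_def by simp
  have We: "W $$ (i,j) = ws ! j $ i / complex_of_real (c j)" if "i < n" "j < n" for i j
    unfolding W_def using that by simp
  have WW: "mat_adjoint W * W = 1\<^sub>m n"
  proof (rule eq_matI)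
    fix j k assume "j < dim_row (1\<^sub>m n)" "k < dim_col (1\<^sub>m n)"
    hence j: "j < n" and k: "k < n" by auto
    have "(mat_adjoint W * W) $$ (j,k) = (\<Sum>i<n. mat_adjoint W $$ (j,i) * W $$ (i,k))"
      by (rule mult_index[OF adj_carrier[OF Wc] Wc j k])
    also have "\<dots> = (\<Sum>i<n. ws ! k $ i * cnj (ws ! j $ i) / (complex_of_real (c j) * complex_of_real (c k)))"
      using Wc j k by (intro sum.cong) (auto simp: We)
    also have "\<dots> = (ws ! k \<bullet>c ws ! j) / (complex_of_real (c j) * complex_of_real (c k))"
      unfolding sp[OF j k] by (simp add: sum_divide_distrib)
    also have "\<dots> = 1\<^sub>m n $$ (j,k)"
    proof (cases "j = k")
      case True
      then show ?thesis using spd[OF j] cpos[OF j] j by (simp add: power2_eq_square)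
    next
      case False
      then have "ws ! k \<bullet>c ws ! j = 0" using corthogonalD[OF orth, of k j] j k lws by simp
      then show ?thesis using False j k by simp
    qed
    finally show "(mat_adjoint W * W) $$ (j,k) = 1\<^sub>m n $$ (j,k)" .
  qed (use Wc in auto)
  have Wu: "unitary n W" by (rule unitary_intro[OF Wc WW])
  have AW0: "(A * W) $$ (k,0) = e * W $$ (k,0)" if k: "k < n" for k
  proof -
    have n0: "0 < n" unfolding n_def by simp
    have "(A * W) $$ (k,0) = (\<Sum>l<n. A $$ (k,l) * W $$ (l,0))" by (rule mult_index[OF Ac Wc k n0])
    also have "\<dots> = (\<Sum>l<n. A $$ (k,l) * v $ l) / complex_of_real (c 0)"
      using n0 by (simp add: We ws0 sum_divide_distrib)
    also have "(\<Sum>l<n. A $$ (k,l) * v $ l) = (A *\<^sub>v v) $ k"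
      using Ac v k by (simp add: scalar_prod_def atLeast0LessThan)
    also have "\<dots> = e * v $ k" using Av v k by simp
    finally show ?thesis using n0 k by (simp add: We ws0)
  qed
  define A' where "A' = mat_adjoint W * A * W"
  have A'c: "A' \<in> carrier_mat n n" unfolding A'_def using mult_carrier_mat[OF mult_carrier_mat[OF adj_carrier[OF Wc] Ac] Wc] .
  have hA': "herm n A'"
  proof -
    have "mat_adjoint A' = mat_adjoint (mat_adjoint W * (A * W))"
      unfolding A'_def using Ac Wc by (simp add: assoc')
    also have "\<dots> = mat_adjoint (A * W) * mat_adjoint (mat_adjoint W)"
      by (rule adj_mult[OF adj_carrier[OF Wc] mult_carrier_mat[OF Ac Wc]])
    also have "\<dots> = mat_adjoint W * A * W"
      using adj_mult[OF Ac Wc] hA by simp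
    finally show ?thesis unfolding herm_def A'_def using A'c A'_def by simp
  qed
  have A'0: "A' $$ (i,0) = (if i = 0 then e else 0)" if i: "i < n" for i
  proof -
    have n0: "0 < n" unfolding n_def by simp
    have "A' $$ (i,0) = (mat_adjoint W * (A * W)) $$ (i,0)" unfolding A'_def using Ac Wc by (simp add: assoc')
    also have "\<dots> = (\<Sum>k<n. mat_adjoint W $$ (i,k) * (A * W) $$ (k,0))"
      by (rule mult_index[OF adj_carrier[OF Wc] mult_carrier_mat[OF Ac Wc] i n0])
    also have "\<dots> = e * (\<Sum>k<n. mat_adjoint W $$ (i,k) * W $$ (k,0))"
      by (simp add: AW0 sum_distrib_left mult_ac)
    also have "(\<Sum>k<n. mat_adjoint W $$ (i,k) * W $$ (k,0)) = (mat_adjoint W * W) $$ (i,0)"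
      by (rule mult_index[OF adj_carrier[OF Wc] Wc i n0, symmetric])
    also have "\<dots> = (if i = 0 then 1 else 0)" unfolding WW using i n0 by simp
    finally show ?thesis by simp
  qed
  have A'0': "A' $$ (0,j) = (if j = 0 then e else 0)" if j: "j < n" for j
  proof -
    have n0: "0 < n" unfolding n_def by simp
    have "A' $$ (0,j) = cnj (A' $$ (j,0))" by (rule herm_index[OF hA' n0 j])
    also have "\<dots> = (if j = 0 then cnj e else 0)" using A'0[OF j] by simp
    also have "cnj e = e" using herm_index[OF hA' n0 n0] A'0[OF n0] by simp
    finally show ?thesis .
  qed
  have ereal: "complex_of_real (Re e) = e"
  proof -
    have n0: "0 < n" unfolding n_def by simp
    have "cnj e = e" using herm_index[OF hA' n0 n0] A'0[OF n0] by simp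
    hence "Im e = 0" by (metis Reals_cnj_iff complex_is_Real_iff)
    thus ?thesis by (simp add: complex_eq_iff)
  qed
  define A3 where "A3 = mat m m (\<lambda>(i,j). A' $$ (Suc i, Suc j))"
  have hA3: "herm m A3"
    unfolding herm_def
  proof
    show "A3 \<in> carrier_mat m m" unfolding A3_def by simp
    show "mat_adjoint A3 = A3"
      by (rule eq_matI) (auto simp: A3_def n_def intro: herm_index[OF hA', symmetric])
  qed
  from Suc.hyps[OF hA3] obtain U3 l3 where U3: "unitary m U3" and A3U: "A3 = U3 * diagm m l3 * mat_adjoint U3"
    by blast
  have U3c: "U3 \<in> carrier_mat m m" and U3U3: "mat_adjoint U3 * U3 = 1\<^sub>m m" using U3 unfolding unitary_def by auto
  define U2 where "U2 = mat n n (\<lambda>(i,j). if i = 0 \<and> j = 0 then 1 else if i = 0 \<or> j = 0 then 0 else U3 $$ (i - 1, j - 1))"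
  define l where "l = (\<lambda>i. if i = 0 then Re e else l3 (i - 1))"
  have U2c: "U2 \<in> carrier_mat n n" unfolding U2_def by simp
  have U2e: "U2 $$ (i,j) = (if i = 0 \<and> j = 0 then 1 else if i = 0 \<or> j = 0 then 0 else U3 $$ (i - 1, j - 1))"
    if "i < n" "j < n" for i j unfolding U2_def using that by simp
  have U2U2: "mat_adjoint U2 * U2 = 1\<^sub>m n"
  proof (rule eq_matI)
    fix i j assume "i < dim_row (1\<^sub>m n)" "j < dim_col (1\<^sub>m n)"
    hence i: "i < n" and j: "j < n" by auto
    have "(mat_adjoint U2 * U2) $$ (i,j) = (\<Sum>k<n. cnj (U2 $$ (k,i)) * U2 $$ (k,j))"
      using mult_index[OF adj_carrier[OF U2c] U2c i j] U2c i j by simp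
    also have "\<dots> = cnj (U2 $$ (0,i)) * U2 $$ (0,j) + (\<Sum>k<m. cnj (U2 $$ (Suc k,i)) * U2 $$ (Suc k,j))"
      unfolding n_def by (rule sum.lessThan_Suc_shift)
    also have "\<dots> = 1\<^sub>m n $$ (i,j)"
    proof (cases i)
      case 0
      then show ?thesis using i j by (cases j) (auto simp: U2e n_def)
    next
      case (Suc i')
      show ?thesis
      proof (cases j)
        case 0
        then show ?thesis using i j Suc by (auto simp: U2e n_def)
      next
        case (Suc j')
        have i': "i' < m" and j': "j' < m" using i j \<open>i = Suc i'\<close> Suc n_def by auto
        have "(\<Sum>k<m. cnj (U2 $$ (Suc k,i)) * U2 $$ (Suc k,j)) = (\<Sum>k<m. mat_adjoint U3 $$ (i',k) * U3 $$ (k,j'))"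
          using i j \<open>i = Suc i'\<close> Suc U3c by (intro sum.cong) (auto simp: U2e n_def)
        also have "\<dots> = (mat_adjoint U3 * U3) $$ (i',j')"
          by (rule mult_index[OF adj_carrier[OF U3c] U3c i' j', symmetric])
        also have "\<dots> = (if i' = j' then 1 else 0)" unfolding U3U3 using i' j' by simp
        finally show ?thesis using i j \<open>i = Suc i'\<close> Suc by (simp add: U2e n_def)
      qed
    qed
    finally show "(mat_adjoint U2 * U2) $$ (i,j) = 1\<^sub>m n $$ (i,j)" .
  qed (use U2c in auto)
  have U2u: "unitary n U2" by (rule unitary_intro[OF U2c U2U2])
  have A'U2: "A' = U2 * diagm n l * mat_adjoint U2"
  proof (rule eq_matI)
    fix i j assume "i < dim_row (U2 * diagm n l * mat_adjoint U2)" "j < dim_col (U2 * diagm n l * mat_adjoint U2)"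
    hence i: "i < n" and j: "j < n" using U2c by auto
    have "(U2 * diagm n l * mat_adjoint U2) $$ (i,j) = (\<Sum>k<n. U2 $$ (i,k) * complex_of_real (l k) * cnj (U2 $$ (j,k)))"
      by (rule UDU_index[OF U2c i j])
    also have "\<dots> = U2 $$ (i,0) * complex_of_real (l 0) * cnj (U2 $$ (j,0)) +
        (\<Sum>k<m. U2 $$ (i,Suc k) * complex_of_real (l (Suc k)) * cnj (U2 $$ (j,Suc k)))"
      unfolding n_def by (rule sum.lessThan_Suc_shift)
    also have "\<dots> = A' $$ (i,j)"
    proof (cases i)
      case 0
      then show ?thesis using i j ereal A'0' by (cases j) (auto simp: U2e n_def l_def)
    next
      case (Suc i')
      show ?thesis
      proof (cases j)
        case 0
        then show ?thesis using i j Suc A'0 by (auto simp: U2e n_def l_def)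
      next
        case (Suc j')
        have i': "i' < m" and j': "j' < m" using i j \<open>i = Suc i'\<close> Suc n_def by auto
        have "(\<Sum>k<m. U2 $$ (i,Suc k) * complex_of_real (l (Suc k)) * cnj (U2 $$ (j,Suc k)))
            = (\<Sum>k<m. U3 $$ (i',k) * complex_of_real (l3 k) * cnj (U3 $$ (j',k)))"
          using i j \<open>i = Suc i'\<close> Suc by (intro sum.cong) (auto simp: U2e n_def l_def)
        also have "\<dots> = A3 $$ (i',j')" unfolding A3U by (rule UDU_index[OF U3c i' j', symmetric])
        also have "\<dots> = A' $$ (i,j)" unfolding A3_def using i' j' \<open>i = Suc i'\<close> Suc by simp
        finally show ?thesis using i j \<open>i = Suc i'\<close> Suc by (simp add: U2e n_def)
      qed
    qed
    finally show "A' $$ (i,j) = (U2 * diagm n l * mat_adjoint U2) $$ (i,j)" by simp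
  qed (use U2c A'c in auto)
  have "A = W * A' * mat_adjoint W"
    using conj_unitary[OF unitary_adj[OF Wu] Ac] unfolding A'_def by simp
  also have "\<dots> = (W * U2) * diagm n l * mat_adjoint (W * U2)"
    unfolding A'U2 adj_mult[OF Wc U2c] using Wc U2c by (simp add: assoc')
  finally show ?case unfolding n_def[symmetric] using unitary_mult[OF Wu U2u] by blast
qed

lemma diag_bound: assumes U: "unitary n U" and V: "unitary n V" and A: "A = U * diagm n l * mat_adjoint U"
  shows "(\<Sum>j<n. cmod ((mat_adjoint V * A * V) $$ (j,j))) \<le> (\<Sum>i<n. \<bar>l i\<bar>)"
proof -
  define W where "W = mat_adjoint V * U"
  have Uc: "U \<in> carrier_mat n n" "mat_adjoint U \<in> carrier_mat n n" using U unfolding unitary_def by auto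
  have Vc: "V \<in> carrier_mat n n" "mat_adjoint V \<in> carrier_mat n n" using V unfolding unitary_def by auto
  have D: "diagm n l \<in> carrier_mat n n" by simp
  have W: "unitary n W" unfolding W_def by (rule unitary_mult[OF unitary_adj[OF V] U])
  have Wc: "W \<in> carrier_mat n n" using W unfolding unitary_def by auto
  have WW: "mat_adjoint W * W = 1\<^sub>m n" using W unfolding unitary_def by auto
  have adjW: "mat_adjoint W = mat_adjoint U * V"
    unfolding W_def using adj_mult[OF Vc(2) Uc(1)] by simp
  have eq: "mat_adjoint V * A * V = W * diagm n l * mat_adjoint W"
  proof -
    have UD: "U * diagm n l \<in> carrier_mat n n" using mult_carrier_mat[OF Uc(1) D] .
    have "mat_adjoint V * A * V = mat_adjoint V * (U * diagm n l * mat_adjoint U) * V" using A by simp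
    also have "\<dots> = mat_adjoint V * ((U * diagm n l) * (mat_adjoint U * V))"
      using assoc_mult_mat[OF Vc(2) mult_carrier_mat[OF UD Uc(2)] Vc(1)]
        assoc_mult_mat[OF UD Uc(2) Vc(1)] by simp
    also have "\<dots> = (mat_adjoint V * (U * diagm n l)) * (mat_adjoint U * V)"
      by (rule assoc_mult_mat[OF Vc(2) UD mult_carrier_mat[OF Uc(2) Vc(1)], symmetric])
    also have "mat_adjoint V * (U * diagm n l) = W * diagm n l"
      unfolding W_def by (rule assoc_mult_mat[OF Vc(2) Uc(1) D, symmetric])
    finally show ?thesis using adjW by simp
  qed
  have e: "cmod ((mat_adjoint V * A * V) $$ (j,j)) \<le> (\<Sum>k<n. \<bar>l k\<bar> * (cmod (W $$ (j,k)))\<^sup>2)" if j: "j < n" for j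
  proof -
    have "(mat_adjoint V * A * V) $$ (j,j) = (\<Sum>k<n. W $$ (j,k) * complex_of_real (l k) * cnj (W $$ (j,k)))"
      unfolding eq by (rule UDU_index[OF Wc j j])
    hence "cmod ((mat_adjoint V * A * V) $$ (j,j)) \<le> (\<Sum>k<n. cmod (W $$ (j,k) * complex_of_real (l k) * cnj (W $$ (j,k))))"
      by (simp add: norm_sum)
    also have "\<dots> = (\<Sum>k<n. \<bar>l k\<bar> * (cmod (W $$ (j,k)))\<^sup>2)"
      by (simp add: norm_mult power2_eq_square mult_ac)
    finally show ?thesis .
  qed
  have c: "(\<Sum>j<n. (cmod (W $$ (j,k)))\<^sup>2) = 1" if k: "k < n" for k
  proof -
    have "(1::complex) = (mat_adjoint W * W) $$ (k,k)" using WW k by simp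
    also have "\<dots> = (\<Sum>j<n. mat_adjoint W $$ (k,j) * W $$ (j,k))"
      by (rule mult_index[OF adj_carrier[OF Wc] Wc k k])
    also have "\<dots> = (\<Sum>j<n. complex_of_real ((cmod (W $$ (j,k)))\<^sup>2))"
      using Wc k by (intro sum.cong) (simp_all add: complex_norm_square mult.commute del: of_real_power)
    also have "\<dots> = complex_of_real (\<Sum>j<n. (cmod (W $$ (j,k)))\<^sup>2)" by simp
    finally show ?thesis by (metis of_real_eq_1_iff)
  qed
  have "(\<Sum>j<n. cmod ((mat_adjoint V * A * V) $$ (j,j))) \<le> (\<Sum>j<n. \<Sum>k<n. \<bar>l k\<bar> * (cmod (W $$ (j,k)))\<^sup>2)"
    by (rule sum_mono) (rule e, simp)
  also have "\<dots> = (\<Sum>k<n. \<bar>l k\<bar> * (\<Sum>j<n. (cmod (W $$ (j,k)))\<^sup>2))"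
    by (subst sum.swap) (simp add: sum_distrib_left)
  also have "\<dots> = (\<Sum>k<n. \<bar>l k\<bar>)" using c by simp
  finally show ?thesis .
qed

lemma adj_add: fixes A B :: "complex mat" assumes "A \<in> carrier_mat n m" "B \<in> carrier_mat n m"
  shows "mat_adjoint (A + B) = mat_adjoint A + mat_adjoint B"
  by (rule eq_matI, insert assms, auto)

lemma trace_norm_nonneg: assumes "herm n X" shows "trace_norm X \<ge> 0"
proof -
  obtain U l where "unitary n U" "X = U * diagm n l * mat_adjoint U" using spectral[OF assms] by blast
  from trace_norm_spec[OF this] show ?thesis by (simp add: sum_nonneg)
qed

lemma trace_norm_triangle: assumes X: "herm n X" and Y: "herm n Y"
  shows "trace_norm (X + Y) \<le> trace_norm X + trace_norm Y"
proof -
  have Xc: "X \<in> carrier_mat n n" and Yc: "Y \<in> carrier_mat n n" using X Y unfolding herm_def by auto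
  have Z: "herm n (X + Y)" using X Y adj_add[OF Xc Yc] unfolding herm_def by auto
  obtain U l where U: "unitary n U" and XU: "X = U * diagm n l * mat_adjoint U" using spectral[OF X] by blast
  obtain U' l' where U': "unitary n U'" and YU: "Y = U' * diagm n l' * mat_adjoint U'" using spectral[OF Y] by blast
  obtain V e where V: "unitary n V" and ZV: "X + Y = V * diagm n e * mat_adjoint V" using spectral[OF Z] by blast
  have Vc: "V \<in> carrier_mat n n" "mat_adjoint V \<in> carrier_mat n n" and VV: "mat_adjoint V * V = 1\<^sub>m n"
    using V unfolding unitary_def by auto
  have D: "diagm n e \<in> carrier_mat n n" by simp
  have VZV: "mat_adjoint V * (X + Y) * V = diagm n e"
  proof -
    have "mat_adjoint V * (X + Y) * V = mat_adjoint V * (V * diagm n e * mat_adjoint V) * V" using ZV by simp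
    also have "\<dots> = diagm n e" by (rule conj_unitary[OF V D])
    finally show ?thesis .
  qed
  have split: "mat_adjoint V * (X + Y) * V = mat_adjoint V * X * V + mat_adjoint V * Y * V"
    using mult_add_distrib_mat[OF Vc(2) Xc Yc]
      add_mult_distrib_mat[OF mult_carrier_mat[OF Vc(2) Xc] mult_carrier_mat[OF Vc(2) Yc] Vc(1)] by simp
  have "trace_norm (X + Y) = (\<Sum>j<n. \<bar>e j\<bar>)" by (rule trace_norm_spec[OF V ZV])
  also have "\<dots> \<le> (\<Sum>j<n. cmod ((mat_adjoint V * X * V) $$ (j,j)) + cmod ((mat_adjoint V * Y * V) $$ (j,j)))"
  proof (rule sum_mono)
    fix j assume "j \<in> {..<n}" hence j: "j < n" by simp
    have "complex_of_real (e j) = (mat_adjoint V * X * V) $$ (j,j) + (mat_adjoint V * Y * V) $$ (j,j)"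
    proof -
      have "complex_of_real (e j) = (mat_adjoint V * (X + Y) * V) $$ (j,j)" using VZV j by simp
      also have "\<dots> = (mat_adjoint V * X * V + mat_adjoint V * Y * V) $$ (j,j)" using split by simp
      also have "\<dots> = (mat_adjoint V * X * V) $$ (j,j) + (mat_adjoint V * Y * V) $$ (j,j)"
        using j Vc Xc Yc by simp
      finally show ?thesis .
    qed
    hence "\<bar>e j\<bar> = cmod ((mat_adjoint V * X * V) $$ (j,j) + (mat_adjoint V * Y * V) $$ (j,j))"
      by (metis norm_of_real)
    thus "\<bar>e j\<bar> \<le> cmod ((mat_adjoint V * X * V) $$ (j,j)) + cmod ((mat_adjoint V * Y * V) $$ (j,j))"
      using norm_triangle_ineq by simp
  qed
  also have "\<dots> = (\<Sum>j<n. cmod ((mat_adjoint V * X * V) $$ (j,j))) + (\<Sum>j<n. cmod ((mat_adjoint V * Y * V) $$ (j,j)))"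
    by (rule sum.distrib)
  also have "\<dots> \<le> (\<Sum>i<n. \<bar>l i\<bar>) + (\<Sum>i<n. \<bar>l' i\<bar>)"
    by (intro add_mono diag_bound[OF U V XU] diag_bound[OF U' V YU])
  also have "\<dots> = trace_norm X + trace_norm Y"
    using trace_norm_spec[OF U XU] trace_norm_spec[OF U' YU] by simp
  finally show ?thesis .
qed

lemma trace_norm_smult: assumes X: "herm n X"
  shows "trace_norm (complex_of_real c \<cdot>\<^sub>m X) = \<bar>c\<bar> * trace_norm X"
proof -
  obtain U l where U: "unitary n U" and XU: "X = U * diagm n l * mat_adjoint U" using spectral[OF X] by blast
  have Uc: "U \<in> carrier_mat n n" using U unfolding unitary_def by auto
  have Xc: "X \<in> carrier_mat n n" using X unfolding herm_def by auto
  have eq: "complex_of_real c \<cdot>\<^sub>m X = U * diagm n (\<lambda>i. c * l i) * mat_adjoint U"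
  proof (rule eq_matI)
    fix i j assume "i < dim_row (U * diagm n (\<lambda>i. c * l i) * mat_adjoint U)" "j < dim_col (U * diagm n (\<lambda>i. c * l i) * mat_adjoint U)"
    hence i: "i < n" and j: "j < n" using Uc by auto
    have "(complex_of_real c \<cdot>\<^sub>m X) $$ (i,j) = complex_of_real c * X $$ (i,j)" using Xc i j by simp
    also have "X $$ (i,j) = (\<Sum>k<n. U $$ (i,k) * complex_of_real (l k) * cnj (U $$ (j,k)))"
      unfolding XU by (rule UDU_index[OF Uc i j])
    also have "complex_of_real c * \<dots> = (\<Sum>k<n. U $$ (i,k) * complex_of_real (c * l k) * cnj (U $$ (j,k)))"
      by (simp add: sum_distrib_left algebra_simps)
    also have "\<dots> = (U * diagm n (\<lambda>i. c * l i) * mat_adjoint U) $$ (i,j)"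
      by (rule UDU_index[OF Uc i j, symmetric])
    finally show "(complex_of_real c \<cdot>\<^sub>m X) $$ (i,j) = (U * diagm n (\<lambda>i. c * l i) * mat_adjoint U) $$ (i,j)" .
  qed (use Uc Xc in auto)
  have "trace_norm (complex_of_real c \<cdot>\<^sub>m X) = (\<Sum>i<n. \<bar>c * l i\<bar>)" by (rule trace_norm_spec[OF U eq])
  also have "\<dots> = \<bar>c\<bar> * (\<Sum>i<n. \<bar>l i\<bar>)" by (simp add: abs_mult sum_distrib_left)
  finally show ?thesis using trace_norm_spec[OF U XU] by simp
qed


lemma adj_A_U_diag: assumes Uc: "U \<in> carrier_mat n n" and A: "A \<in> carrier_mat n n" and k: "k < n"
  shows "(mat_adjoint U * A * U) $$ (k,k) = (\<Sum>a<n. cnj (U $$ (a,k)) * (\<Sum>b<n. A $$ (a,b) * U $$ (b,k)))"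
proof -
  have "(mat_adjoint U * A * U) = mat_adjoint U * (A * U)" using Uc A by (simp add: assoc')
  hence "(mat_adjoint U * A * U) $$ (k,k) = (\<Sum>a<n. mat_adjoint U $$ (k,a) * (A * U) $$ (a,k))"
    using mult_index[OF adj_carrier[OF Uc] mult_carrier_mat[OF A Uc] k k] by simp
  also have "\<dots> = (\<Sum>a<n. cnj (U $$ (a,k)) * (\<Sum>b<n. A $$ (a,b) * U $$ (b,k)))"
    using Uc k by (intro sum.cong) (auto simp: mult_index[OF A Uc])
  finally show ?thesis .
qed

lemma qform_col: fixes U A :: "complex mat" assumes Uc: "U \<in> carrier_mat n n" and A: "A \<in> carrier_mat n n" and k: "k < n"
  shows "conjugate (col U k) \<bullet> (A *\<^sub>v col U k) = (mat_adjoint U * A * U) $$ (k,k)"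
  unfolding adj_A_U_diag[OF Uc A k] using Uc A k
  by (simp add: scalar_prod_def atLeast0LessThan)

lemma trace_conj: assumes U: "unitary n U" and A: "A \<in> carrier_mat n n"
  shows "(\<Sum>k<n. (mat_adjoint U * A * U) $$ (k,k)) = (\<Sum>a<n. A $$ (a,a))"
proof -
  have Uc: "U \<in> carrier_mat n n" and UU: "U * mat_adjoint U = 1\<^sub>m n" using U unfolding unitary_def by auto
  have "(\<Sum>k<n. (mat_adjoint U * A * U) $$ (k,k)) = (\<Sum>k<n. \<Sum>a<n. \<Sum>b<n. A $$ (a,b) * (U $$ (b,k) * cnj (U $$ (a,k))))"
    by (intro sum.cong) (auto simp: adj_A_U_diag[OF Uc A] sum_distrib_left mult_ac)
  also have "\<dots> = (\<Sum>a<n. \<Sum>k<n. \<Sum>b<n. A $$ (a,b) * (U $$ (b,k) * cnj (U $$ (a,k))))"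
    by (rule sum.swap)
  also have "\<dots> = (\<Sum>a<n. \<Sum>b<n. \<Sum>k<n. A $$ (a,b) * (U $$ (b,k) * cnj (U $$ (a,k))))"
    by (intro sum.cong refl sum.swap)
  also have "\<dots> = (\<Sum>a<n. \<Sum>b<n. A $$ (a,b) * (U * mat_adjoint U) $$ (b,a))"
  proof (intro sum.cong refl)
    fix a b assume a: "a \<in> {..<n}" and b: "b \<in> {..<n}"
    have "(U * mat_adjoint U) $$ (b,a) = (\<Sum>k<n. U $$ (b,k) * mat_adjoint U $$ (k,a))"
      using a b by (intro mult_index[OF Uc adj_carrier[OF Uc]]) auto
    also have "\<dots> = (\<Sum>k<n. U $$ (b,k) * cnj (U $$ (a,k)))" using a b Uc by (intro sum.cong) auto
    finally show "(\<Sum>k<n. A $$ (a,b) * (U $$ (b,k) * cnj (U $$ (a,k)))) = A $$ (a,b) * (U * mat_adjoint U) $$ (b,a)"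
      by (simp add: sum_distrib_left)
  qed
  also have "\<dots> = (\<Sum>a<n. \<Sum>b<n. if b = a then A $$ (a,a) else 0)"
    unfolding UU by (intro sum.cong refl) auto
  also have "\<dots> = (\<Sum>a<n. A $$ (a,a))" by simp
  finally show ?thesis .
qed

lemma sum_one_point: fixes n :: nat assumes "i < n"
  shows "(\<Sum>b<n. g b * (if b = i then x else 0)) = g i * (x::complex)"
proof -
  have "(\<Sum>b<n. g b * (if b = i then x else 0)) = (\<Sum>b<n. if b = i then g i * x else 0)"
    by (intro sum.cong) auto
  also have "\<dots> = g i * x" using assms by simp
  finally show ?thesis .
qed

lemma sum_one_point': fixes n :: nat assumes "i < n"
  shows "(\<Sum>b<n. (if b = i then x else 0) * g b) = (x::complex) * g i"
  using sum_one_point[OF assms, of g x] by (simp add: mult.commute)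

lemma qform2: fixes A :: "complex mat" assumes A: "A \<in> carrier_mat n n" and i: "i < n" and j: "j < n"
  shows "conjugate (vec n (\<lambda>k. (if k = i then x else 0) + (if k = j then y else 0))) \<bullet>
    (A *\<^sub>v vec n (\<lambda>k. (if k = i then x else 0) + (if k = j then y else 0)))
    = cnj x * (A $$ (i,i) * x + A $$ (i,j) * y) + cnj y * (A $$ (j,i) * x + A $$ (j,j) * y)"
proof -
  let ?w = "vec n (\<lambda>k. (if k = i then x else 0) + (if k = j then y else 0))"
  have inner: "(A *\<^sub>v ?w) $ a = A $$ (a,i) * x + A $$ (a,j) * y" if a: "a < n" for a
  proof -
    have "(A *\<^sub>v ?w) $ a = (\<Sum>b<n. A $$ (a,b) * ((if b = i then x else 0) + (if b = j then y else 0)))"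
      using A a by (simp add: scalar_prod_def atLeast0LessThan)
    also have "\<dots> = (\<Sum>b<n. A $$ (a,b) * (if b = i then x else 0)) + (\<Sum>b<n. A $$ (a,b) * (if b = j then y else 0))"
      by (simp add: distrib_left sum.distrib)
    also have "\<dots> = A $$ (a,i) * x + A $$ (a,j) * y" using i j by (simp only: sum_one_point)
    finally show ?thesis .
  qed
  have dimv: "dim_vec (A *\<^sub>v ?w) = n" using A by simp
  have "conjugate ?w \<bullet> (A *\<^sub>v ?w) = (\<Sum>a\<in>{0..<n}. conjugate ?w $ a * (A *\<^sub>v ?w) $ a)"
    unfolding scalar_prod_def dimv ..
  also have "\<dots> = (\<Sum>a<n. cnj ((if a = i then x else 0) + (if a = j then y else 0)) * (A $$ (a,i) * x + A $$ (a,j) * y))"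
    unfolding atLeast0LessThan by (intro sum.cong refl) (simp add: inner del: index_mult_mat_vec)
  also have "\<dots> = (\<Sum>a<n. (if a = i then cnj x else 0) * (A $$ (a,i) * x + A $$ (a,j) * y)) + (\<Sum>a<n. (if a = j then cnj y else 0) * (A $$ (a,i) * x + A $$ (a,j) * y))"
    unfolding sum.distrib[symmetric] by (intro sum.cong refl) (auto simp: distrib_right)
  also have "\<dots> = cnj x * (A $$ (i,i) * x + A $$ (i,j) * y) + cnj y * (A $$ (j,i) * x + A $$ (j,j) * y)"
    using i j by (simp only: sum_one_point')
  finally show ?thesis .
qed

lemma psd_herm: assumes "psd_mat n A" shows "herm n A"
proof -
  have A: "A \<in> carrier_mat n n" and q: "\<And>v. v \<in> carrier_vec n \<Longrightarrow> Im (conjugate v \<bullet> (A *\<^sub>v v)) = 0"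
    using assms unfolding psd_mat_def by auto
  define w where "w = (\<lambda>i j x y. vec n (\<lambda>k. (if k = i then x else 0) + (if k = j then (y::complex) else 0)))"
  have wc: "w i j x y \<in> carrier_vec n" for i j x y unfolding w_def by simp
  have qw: "Im (conjugate (w i j x y) \<bullet> (A *\<^sub>v w i j x y)) = 0" for i j x y by (rule q[OF wc])
  have qf: "conjugate (w i j x y) \<bullet> (A *\<^sub>v w i j x y) = cnj x * (A $$ (i,i) * x + A $$ (i,j) * y) + cnj y * (A $$ (j,i) * x + A $$ (j,j) * y)"
    if "i < n" "j < n" for i j x y unfolding w_def by (rule qform2[OF A that])
  have d: "Im (A $$ (i,i)) = 0" if i: "i < n" for i
  proof -
    have "Im (cnj 1 * (A $$ (i,i) * 1 + A $$ (i,i) * 0) + cnj 0 * (A $$ (i,i) * 1 + A $$ (i,i) * 0)) = 0"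
      using qw[of i i 1 0] qf[OF i i, of 1 0] by metis
    thus ?thesis by simp
  qed
  have h: "A $$ (i,j) = cnj (A $$ (j,i))" if i: "i < n" and j: "j < n" for i j
  proof (cases "i = j")
    case True
    then show ?thesis using d[OF i] by (simp add: complex_eq_iff)
  next
    case False
    have "Im (cnj 1 * (A $$ (i,i) * 1 + A $$ (i,j) * 1) + cnj 1 * (A $$ (j,i) * 1 + A $$ (j,j) * 1)) = 0"
      using qw[of i j 1 1] qf[OF i j, of 1 1] by metis
    hence 1: "Im (A $$ (i,j)) + Im (A $$ (j,i)) = 0" using d[OF i] d[OF j] by simp
    have "Im (cnj 1 * (A $$ (i,i) * 1 + A $$ (i,j) * \<i>) + cnj \<i> * (A $$ (j,i) * 1 + A $$ (j,j) * \<i>)) = 0"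
      using qw[of i j 1 \<i>] qf[OF i j, of 1 \<i>] by metis
    hence 2: "Re (A $$ (i,j)) - Re (A $$ (j,i)) = 0" using d[OF i] d[OF j] by (simp add: algebra_simps)
    show ?thesis using 1 2 by (simp add: complex_eq_iff)
  qed
  have "mat_adjoint A = A"
  proof (rule eq_matI)
    fix i j assume "i < dim_row A" "j < dim_col A"
    hence i: "i < n" and j: "j < n" using A by auto
    have "mat_adjoint A $$ (i,j) = cnj (A $$ (j,i))" using A i j by simp
    also have "\<dots> = A $$ (i,j)" by (rule sym[OF h[OF i j]])
    finally show "mat_adjoint A $$ (i,j) = A $$ (i,j)" .
  qed (use A in auto)
  then show ?thesis using A unfolding herm_def by simp
qed

lemma density_herm: assumes "\<tau> \<in> density_ops n" shows "herm n \<tau>"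
proof -
  have "psd_mat n \<tau>" using assms unfolding density_ops_def by simp
  thus ?thesis by (rule psd_herm)
qed

lemma density_trace_norm: assumes "\<tau> \<in> density_ops n" shows "trace_norm \<tau> = 1"
proof -
  have psd: "psd_mat n \<tau>" and tr: "mtrace \<tau> = 1" using assms unfolding density_ops_def by simp_all
  have A: "\<tau> \<in> carrier_mat n n" using psd unfolding psd_mat_def by simp
  have pos: "\<And>v. v \<in> carrier_vec n \<Longrightarrow> 0 \<le> Re (conjugate v \<bullet> (\<tau> *\<^sub>v v))" using psd unfolding psd_mat_def by simp
  obtain U l where U: "unitary n U" and tU: "\<tau> = U * diagm n l * mat_adjoint U"
    using spectral[OF density_herm[OF assms]] by blast
  have Uc: "U \<in> carrier_mat n n" using U unfolding unitary_def by simp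
  have D: "mat_adjoint U * \<tau> * U = diagm n l" unfolding tU by (rule conj_unitary[OF U diagm_carrier])
  have lk: "complex_of_real (l k) = conjugate (col U k) \<bullet> (\<tau> *\<^sub>v col U k)" if k: "k < n" for k
    unfolding qform_col[OF Uc A k] D using k by simp
  have lpos: "l k \<ge> 0" if k: "k < n" for k
  proof -
    have "col U k \<in> carrier_vec n" using Uc k by simp
    hence "0 \<le> Re (conjugate (col U k) \<bullet> (\<tau> *\<^sub>v col U k))" by (rule pos)
    thus ?thesis unfolding lk[OF k, symmetric] by simp
  qed
  have "(\<Sum>k<n. (mat_adjoint U * \<tau> * U) $$ (k,k)) = (\<Sum>k<n. complex_of_real (l k))"
    unfolding D by (intro sum.cong) auto
  also have "\<dots> = complex_of_real (\<Sum>k<n. l k)" by simp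
  finally have s1: "complex_of_real (\<Sum>k<n. l k) = (\<Sum>a<n. \<tau> $$ (a,a))" using trace_conj[OF U A] by simp
  have "mtrace \<tau> = (\<Sum>a<n. \<tau> $$ (a,a))" unfolding mtrace_def using A by simp
  hence "complex_of_real (\<Sum>k<n. l k) = 1" using s1 tr by simp
  hence s: "(\<Sum>k<n. l k) = 1" by (simp only: of_real_eq_1_iff)
  have "trace_norm \<tau> = (\<Sum>k<n. \<bar>l k\<bar>)" by (rule trace_norm_spec[OF U tU])
  also have "\<dots> = (\<Sum>k<n. l k)" using lpos by (intro sum.cong) auto
  finally show ?thesis using s by simp
qed


lemma herm_add: assumes "herm n X" "herm n Y" shows "herm n (X + Y)"
  using assms adj_add[of X n n Y] unfolding herm_def by auto

lemma herm_smult: assumes "herm n X" shows "herm n (complex_of_real c \<cdot>\<^sub>m X)"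
proof -
  have X: "X \<in> carrier_mat n n" and h: "mat_adjoint X = X" using assms unfolding herm_def by auto
  have "mat_adjoint (complex_of_real c \<cdot>\<^sub>m X) = complex_of_real c \<cdot>\<^sub>m mat_adjoint X"
    by (rule eq_matI) (use X in auto)
  thus ?thesis using X h unfolding herm_def by simp
qed

lemma minus_as_add: fixes X Y :: "complex mat" assumes "X \<in> carrier_mat n n" "Y \<in> carrier_mat n n"
  shows "X - Y = X + complex_of_real (-1) \<cdot>\<^sub>m Y"
  by (rule eq_matI) (use assms in auto)

lemma herm_diff: assumes "herm n X" "herm n Y" shows "herm n (X - Y)"
proof -
  have "X \<in> carrier_mat n n" "Y \<in> carrier_mat n n" using assms unfolding herm_def by auto
  thus ?thesis using herm_add[OF assms(1) herm_smult[OF assms(2), of "-1"]] minus_as_add by simp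
qed

lemma trace_norm_swap: assumes "herm n (X - Y)" "X \<in> carrier_mat n n" "Y \<in> carrier_mat n n"
  shows "trace_norm (X - Y) = trace_norm (Y - X)"
proof -
  have "Y - X = complex_of_real (-1) \<cdot>\<^sub>m (X - Y)" by (rule eq_matI) (use assms in auto)
  thus ?thesis using trace_norm_smult[OF assms(1), of "-1"] by simp
qed

lemma tdist_nonneg: assumes "\<rho> \<in> density_ops n" "\<tau> \<in> density_ops n" shows "tdist \<rho> \<tau> \<ge> 0"
  unfolding tdist_def using trace_norm_nonneg[OF herm_diff[OF density_herm[OF assms(1)] density_herm[OF assms(2)]]] by simp

lemma tdist_le1: assumes "\<rho> \<in> density_ops n" "\<tau> \<in> density_ops n" shows "tdist \<rho> \<tau> \<le> 1"
proof -
  have h1: "herm n \<rho>" and h2: "herm n \<tau>" using density_herm assms by auto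
  have c: "\<rho> \<in> carrier_mat n n" "\<tau> \<in> carrier_mat n n" using h1 h2 unfolding herm_def by auto
  have "trace_norm (\<rho> - \<tau>) = trace_norm (\<rho> + complex_of_real (-1) \<cdot>\<^sub>m \<tau>)" using minus_as_add[OF c] by simp
  also have "\<dots> \<le> trace_norm \<rho> + trace_norm (complex_of_real (-1) \<cdot>\<^sub>m \<tau>)"
    by (rule trace_norm_triangle[OF h1 herm_smult[OF h2]])
  also have "\<dots> = 2" using trace_norm_smult[OF h2, of "-1"] density_trace_norm assms by simp
  finally show ?thesis unfolding tdist_def by simp
qed

lemma ket1_carrier: "ket1_proj \<in> carrier_mat 2 2" unfolding ket1_proj_def by simp
lemma batt_carrier: "batt_pi M \<in> carrier_mat 2 2" unfolding batt_pi_def by simp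

lemma mtrace_ket1: "mtrace ket1_proj = 1"
  unfolding mtrace_def ket1_proj_def by (simp add: eval_nat_numeral)

lemma mtrace_batt: "mtrace (batt_pi M) = 1"
  unfolding mtrace_def batt_pi_def by (simp add: eval_nat_numeral)

lemma smult_one_mat: fixes A :: "complex mat" shows "1 \<cdot>\<^sub>m A = A"
  by (rule eq_matI) auto

lemma ket1_decomp: assumes M: "M > 1"
  shows "ket1_proj = complex_of_real (1 + M) \<cdot>\<^sub>m batt_pi M + complex_of_real (- M) \<cdot>\<^sub>m batt_pi (M * M)"
proof -
  have M0: "M \<noteq> 0" using M by simp
  have r1: "(1 + M) * (1 - 1 / M) + (- M) * (1 - 1 / (M * M)) = 0" using M0 by (simp add: field_simps)
  have r2: "(1 + M) * (1 / M) + (- M) * (1 / (M * M)) = 1" using M0 by (simp add: field_simps)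
  have e00: "complex_of_real (1 + M) * complex_of_real (1 - 1 / M) + complex_of_real (- M) * complex_of_real (1 - 1 / (M * M)) = 0"
    using arg_cong[OF r1, of complex_of_real] by (simp only: of_real_add of_real_mult of_real_0)
  have e11: "complex_of_real (1 + M) * complex_of_real (1 / M) + complex_of_real (- M) * complex_of_real (1 / (M * M)) = 1"
    using arg_cong[OF r2, of complex_of_real] by (simp only: of_real_add of_real_mult of_real_1)
  show ?thesis
  proof (rule eq_matI)
    fix i j assume "i < dim_row (complex_of_real (1 + M) \<cdot>\<^sub>m batt_pi M + complex_of_real (- M) \<cdot>\<^sub>m batt_pi (M * M))"
      "j < dim_col (complex_of_real (1 + M) \<cdot>\<^sub>m batt_pi M + complex_of_real (- M) \<cdot>\<^sub>m batt_pi (M * M))"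
    hence i: "i < 2" and j: "j < 2" by (auto simp: batt_pi_def)
    have "i = 0 \<or> i = 1" "j = 0 \<or> j = 1" using i j by auto
    thus "ket1_proj $$ (i,j) = (complex_of_real (1 + M) \<cdot>\<^sub>m batt_pi M + complex_of_real (- M) \<cdot>\<^sub>m batt_pi (M * M)) $$ (i,j)"
      using e00 e11 by (auto simp: ket1_proj_def batt_pi_def simp del: of_real_add of_real_mult of_real_minus of_real_divide of_real_diff)
  qed (auto simp: ket1_proj_def batt_pi_def)
qed

lemma key: assumes P: "\<P> \<subseteq> density_ops d" and E: "\<E> \<subseteq> density_ops d" and M: "M > 1"
  and F: "F \<in> GPL d" and fe: "feasible F \<epsilon> \<P> \<E> M"
  shows "tdist_sets \<P> \<E> \<le> \<epsilon> + M * diam \<E>"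
proof -
  obtain \<rho> where \<rho>P: "\<rho> \<in> \<P>" and d1: "tdist (F ket1_proj) \<rho> \<le> \<epsilon>" using fe unfolding feasible_def by blast
  have inE: "F \<sigma> \<in> \<E>" if "\<sigma> \<in> batt_Pi M" for \<sigma> using fe that unfolding feasible_def by blast
  define \<tau>1 where "\<tau>1 = F (batt_pi M)"
  define \<tau>2 where "\<tau>2 = F (batt_pi (M * M))"
  have t1E: "\<tau>1 \<in> \<E>" unfolding \<tau>1_def by (rule inE) (auto simp: batt_Pi_def)
  have "M \<le> M * M" using M by (simp add: mult_le_cancel_left1)
  hence t2E: "\<tau>2 \<in> \<E>" unfolding \<tau>2_def by (intro inE) (auto simp: batt_Pi_def)
  have t1D: "\<tau>1 \<in> density_ops d" and t2D: "\<tau>2 \<in> density_ops d" and \<rho>D: "\<rho> \<in> density_ops d"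
    using t1E t2E \<rho>P P E by auto
  have h1: "herm d \<tau>1" and h2: "herm d \<tau>2" and h\<rho>: "herm d \<rho>" using t1D t2D \<rho>D density_herm by auto
  have c1: "\<tau>1 \<in> carrier_mat d d" and c2: "\<tau>2 \<in> carrier_mat d d" and c\<rho>: "\<rho> \<in> carrier_mat d d"
    using h1 h2 h\<rho> unfolding herm_def by auto
  have Fc: "\<And>A. A \<in> carrier_mat 2 2 \<Longrightarrow> F A \<in> carrier_mat d d"
    and Fadd: "\<And>A B. A \<in> carrier_mat 2 2 \<Longrightarrow> B \<in> carrier_mat 2 2 \<Longrightarrow> F (A + B) = F A + F B"
    and Fsm: "\<And>A c. A \<in> carrier_mat 2 2 \<Longrightarrow> F (c \<cdot>\<^sub>m A) = c \<cdot>\<^sub>m F A"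
    using F unfolding GPL_def by auto
  define F1 where "F1 = F ket1_proj"
  have F1eq: "F1 = complex_of_real (1 + M) \<cdot>\<^sub>m \<tau>1 + complex_of_real (- M) \<cdot>\<^sub>m \<tau>2"
    unfolding F1_def \<tau>1_def \<tau>2_def ket1_decomp[OF M]
    using Fadd[OF smult_carrier_mat[OF batt_carrier] smult_carrier_mat[OF batt_carrier]] Fsm[OF batt_carrier] by simp
  have hF1: "herm d F1" unfolding F1eq by (intro herm_add herm_smult h1 h2)
  have cF1: "F1 \<in> carrier_mat d d" using hF1 unfolding herm_def by auto
  have eq1: "F1 - \<tau>1 = complex_of_real M \<cdot>\<^sub>m (\<tau>1 - \<tau>2)"
    unfolding F1eq by (rule eq_matI) (use c1 c2 in \<open>auto simp: algebra_simps\<close>)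
  have eq2: "\<rho> - \<tau>1 = (\<rho> - F1) + (F1 - \<tau>1)"
    by (rule eq_matI) (use c1 c\<rho> cF1 in auto)
  have "trace_norm (\<rho> - \<tau>1) \<le> trace_norm (\<rho> - F1) + trace_norm (F1 - \<tau>1)"
    unfolding eq2 by (rule trace_norm_triangle[OF herm_diff[OF h\<rho> hF1] herm_diff[OF hF1 h1]])
  also have "trace_norm (\<rho> - F1) = trace_norm (F1 - \<rho>)"
    by (rule trace_norm_swap[OF herm_diff[OF h\<rho> hF1] c\<rho> cF1])
  also have "trace_norm (F1 - \<tau>1) = M * trace_norm (\<tau>1 - \<tau>2)"
    unfolding eq1 using trace_norm_smult[OF herm_diff[OF h1 h2], of M] M by simp
  finally have td: "tdist \<rho> \<tau>1 \<le> tdist F1 \<rho> + M * tdist \<tau>1 \<tau>2" unfolding tdist_def by simp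
  have "tdist_sets \<P> \<E> \<le> tdist \<rho> \<tau>1"
    unfolding tdist_sets_def
  proof (rule cInf_lower)
    show "tdist \<rho> \<tau>1 \<in> {tdist \<rho> \<tau> |\<rho> \<tau>. \<rho> \<in> \<P> \<and> \<tau> \<in> \<E>}" using \<rho>P t1E by blast
    show "bdd_below {tdist \<rho> \<tau> |\<rho> \<tau>. \<rho> \<in> \<P> \<and> \<tau> \<in> \<E>}"
      by (rule bdd_belowI[of _ 0]) (use P E tdist_nonneg in blast)
  qed
  moreover have "tdist \<tau>1 \<tau>2 \<le> diam \<E>"
    unfolding diam_def
  proof (rule cSup_upper)
    show "tdist \<tau>1 \<tau>2 \<in> {tdist \<tau> \<tau>' |\<tau> \<tau>'. \<tau> \<in> \<E> \<and> \<tau>' \<in> \<E>}" using t1E t2E by blast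
    show "bdd_above {tdist \<tau> \<tau>' |\<tau> \<tau>'. \<tau> \<in> \<E> \<and> \<tau>' \<in> \<E>}"
      by (rule bdd_aboveI[of _ 1]) (use E tdist_le1 in blast)
  qed
  moreover have "tdist F1 \<rho> \<le> \<epsilon>" using d1 unfolding F1_def .
  ultimately show ?thesis using td M by (smt (verit) mult_left_mono)
qed


theorem propositionS3:
  fixes d :: nat and \<epsilon> :: real and \<P> \<E> :: "complex mat set"
    and TO :: "(complex mat \<Rightarrow> complex mat) set"
  assumes "0 \<le> \<epsilon>" and "\<epsilon> < 1"
    and "\<P> \<subseteq> density_ops d" and "\<E> \<subseteq> density_ops d"
    and TO_replacer: "\<forall>\<tau> \<in> density_ops d. replacer \<tau> \<in> TO"
  shows "(eps_ball d \<epsilon> \<P> \<inter> \<E> \<noteq> {} \<longrightarrow>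
            work_cost TO \<epsilon> \<P> \<E> = 0 \<and>
            (\<exists>\<tau> \<in> \<E>. \<forall>M > 1. feasible (replacer \<tau>) \<epsilon> \<P> \<E> M))
       \<and> (tdist_sets \<P> \<E> > \<epsilon> \<longrightarrow>
            work_cost (GPL d) \<epsilon> \<P> \<E> \<ge>
              (if diam \<E> = 0 then \<infinity> else ereal (ln ((tdist_sets \<P> \<E> - \<epsilon>) / diam \<E>))))"
proof (intro conjI impI)
  assume "eps_ball d \<epsilon> \<P> \<inter> \<E> \<noteq> {}"
  then obtain \<omega> \<rho> where \<omega>E: "\<omega> \<in> \<E>" and \<omega>D: "\<omega> \<in> density_ops d" and \<rho>P: "\<rho> \<in> \<P>"
    and dist: "tdist \<omega> \<rho> \<le> \<epsilon>"
    unfolding eps_ball_def by blast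
  have feas: "feasible (replacer \<omega>) \<epsilon> \<P> \<E> M" for M
  proof -
    have "replacer \<omega> ket1_proj = \<omega>" unfolding replacer_def mtrace_ket1 by (rule smult_one_mat)
    moreover have "replacer \<omega> \<sigma> = \<omega>" if "\<sigma> \<in> batt_Pi M" for \<sigma>
      using that unfolding batt_Pi_def replacer_def by (auto simp: mtrace_batt smult_one_mat)
    ultimately show ?thesis unfolding feasible_def using \<rho>P dist \<omega>E by auto
  qed
  have S: "{M. M > 1 \<and> (\<exists>F \<in> TO. feasible F \<epsilon> \<P> \<E> M)} = {1<..}"
    using feas TO_replacer \<omega>D by auto
  show "work_cost TO \<epsilon> \<P> \<E> = 0"
    unfolding work_cost_def Let_def S by simp
  show "\<exists>\<tau> \<in> \<E>. \<forall>M > 1. feasible (replacer \<tau>) \<epsilon> \<P> \<E> M" using \<omega>E feas by blast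
next
  assume T: "tdist_sets \<P> \<E> > \<epsilon>"
  define S where "S = {M. M > 1 \<and> (\<exists>F \<in> GPL d. feasible F \<epsilon> \<P> \<E> M)}"
  have wc: "work_cost (GPL d) \<epsilon> \<P> \<E> = (if S = {} then \<infinity> else ereal (ln (Inf S)))"
    unfolding work_cost_def Let_def S_def ..
  show "work_cost (GPL d) \<epsilon> \<P> \<E> \<ge>
              (if diam \<E> = 0 then \<infinity> else ereal (ln ((tdist_sets \<P> \<E> - \<epsilon>) / diam \<E>)))"
  proof (cases "S = {}")
    case True
    then show ?thesis unfolding wc by simp
  next
    case False
    have kS: "tdist_sets \<P> \<E> - \<epsilon> \<le> M * diam \<E>" and M1: "M > 1" if "M \<in> S" for M
      using that key[OF assms(3,4)] unfolding S_def by fastforce+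
    from False obtain M0 where M0: "M0 \<in> S" by blast
    have pos: "0 < M0 * diam \<E>" using kS[OF M0] T by simp
    have dpos: "diam \<E> > 0" using pos M1[OF M0] by (simp add: zero_less_mult_iff)
    define q where "q = (tdist_sets \<P> \<E> - \<epsilon>) / diam \<E>"
    have qpos: "q > 0" unfolding q_def using T dpos by simp
    have qle: "q \<le> Inf S"
    proof (rule cInf_greatest[OF False])
      fix M assume "M \<in> S"
      thus "q \<le> M" unfolding q_def using kS[of M] dpos by (simp add: pos_divide_le_eq)
    qed
    have "ln q \<le> ln (Inf S)" using qpos qle by simp
    thus ?thesis unfolding wc q_def using False dpos by simp
  qed
qed

end
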